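(* If $n_1=\dots=n_Q=n/Q$, then $\boldsymbol{c}_q[h]=\boldsymbol{b}_q[\mathcal{F}_h]$ for all $q,h$, $\hat{\boldsymbol{\theta}}_x[h]=\hat{\boldsymbol{\tau}}_x[\mathcal{F}_h]$, and $M_h=\frac{n}{4}\sum_{f\in\mathcal{F}_h}\hat{\boldsymbol{\tau}}_{x,f}'\boldsymbol{S}_{xx}^{-1}\hat{\boldsymbol{\tau}}_{x,f}$.
   Context: Setup ($2^K$ factorial experiment, finite population). $K\ge1$ two-level factors, $Q=2^K$ treatment combinations $q=1,\dots,Q$; combination $q$ sets factor $k$ at $\iota_k(q)\in\{-1,+1\}$, bijectively onto $\{-1,+1\}^K$. $F=Q-1$ factorial effects, one per nonempty $A\subseteq\{1,\dots,K\}$, enumerated $f=1,\dots,F$, with $g_{fq}=\prod_{k\in A}\iota_k(q)$; $\boldsymbol{b}_q=(g_{1q},\dots,g_{Fq})'$. Units $i=1,\dots,n$ with covariates $\boldsymbol{x}_i\in\mathbb{R}^L$; $\boldsymbol{S}_{xx}$ their finite-population covariance (divisor $n-1$, nonsingular). Treatment groups of sizes $n_q\ge1$; $\hat{\bar{\boldsymbol{x}}}(q)$ is the covariate mean in group $q$; $\hat{\boldsymbol{\tau}}_{x,f}=2^{-(K-1)}\sum_qg_{fq}\hat{\bar{\boldsymbol{x}}}(q)$; $\hat{\boldsymbol{\tau}}_x[\mathcal{I}]$ is the concatenation of $\hat{\boldsymbol{\tau}}_{x,f}$, $f\in\mathcal{I}$ (in increasing order). Tiers: partition $\{1,\dots,F\}$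 into disjoint nonempty $\mathcal{F}_1,\dots,\mathcal{F}_H$, $\mathcal{F}_{\overline h}=\bigcup_{l\le h}\mathcal{F}_l$. $\tilde{\boldsymbol{B}}=2^{-2(K-1)}\sum_qn_q^{-1}\boldsymbol{b}_q\boldsymbol{b}_q'$; $\boldsymbol{b}_q[\mathcal{I}]$ subvector, $\tilde{\boldsymbol{B}}[\mathcal{I},\mathcal{J}]$ submatrix. $\boldsymbol{c}_q[1]=\boldsymbol{b}_q[\mathcal{F}_1]$, and for $h\ge2$, $\boldsymbol{c}_q[h]=\boldsymbol{b}_q[\mathcal{F}_h]-\tilde{\boldsymbol{B}}[\mathcal{F}_h,\mathcal{F}_{\overline{h-1}}]\{\tilde{\boldsymbol{B}}[\mathcal{F}_{\overline{h-1}},\mathcal{F}_{\overline{h-1}}]\}^{-1}\boldsymbol{b}_q[\mathcal{F}_{\overline{h-1}}]$. $\hat{\boldsymbol{\theta}}_x[h]=2^{-(K-1)}\sum_q\boldsymbol{c}_q[h]\otimes\hat{\bar{\boldsymbol{x}}}(q)$, $\boldsymbol{W}_{xx}[h]=2^{-2(K-1)}\sum_qn_q^{-1}(\boldsymbol{c}_q[h]\boldsymbol{c}_q[h]')\otimes\boldsymbol{S}_{xx}$, $M_h=\hat{\boldsymbol{\theta}}_x[h]'\boldsymbol{W}_{xx}[h]^{-1}\hat{\boldsymbol{\theta}}_x[h]$. *)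

theory Defs
  imports "HOL-Library.FuncSet" "Jordan_Normal_Form.Matrix"
begin

text \<open>Treatment combinations are q = 1..2^K, factors k = 1..K,
  factorial effects f = 1..2^K-1, units i = 1..n. iota q k is the level
  (-1 or +1) of factor k in combination q; eff f is the (nonempty) set of
  factors defining effect f; Z i is the treatment combination of unit i;
  x i is the covariate vector (dimension L) of unit i.\<close>

definition minv :: "real mat \<Rightarrow> real mat" where
  "minv A = (SOME B. B \<in> carrier_mat (dim_row A) (dim_row A) \<and>
              A * B = 1\<^sub>m (dim_row A) \<and> B * A = 1\<^sub>m (dim_row A))"

definition kron_vec :: "real vec \<Rightarrow> real vec \<Rightarrow> real vec" where
  "kron_vec c v = vec (dim_vec c * dim_vec v)
     (\<lambda>j. c $ (j div dim_vec v) * v $ (j mod dim_vec v))"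

definition kron_mat :: "real mat \<Rightarrow> real mat \<Rightarrow> real mat" where
  "kron_mat A B = mat (dim_row A * dim_row B) (dim_col A * dim_col B)
     (\<lambda>(i,j). A $$ (i div dim_row B, j div dim_col B) * B $$ (i mod dim_row B, j mod dim_col B))"

definition outer :: "real vec \<Rightarrow> real mat" where
  "outer c = mat (dim_vec c) (dim_vec c) (\<lambda>(i,j). c $ i * c $ j)"

definition gfac :: "(nat \<Rightarrow> nat \<Rightarrow> real) \<Rightarrow> (nat \<Rightarrow> nat set) \<Rightarrow> nat \<Rightarrow> nat \<Rightarrow> real" where
  "gfac iota eff f q = (\<Prod>k\<in>eff f. iota q k)"

definition bsub :: "(nat \<Rightarrow> nat \<Rightarrow> real) \<Rightarrow> (nat \<Rightarrow> nat set) \<Rightarrow> nat \<Rightarrow> nat set \<Rightarrow> real vec" where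
  "bsub iota eff q I = vec (card I) (\<lambda>j. gfac iota eff (sorted_list_of_set I ! j) q)"

definition nq :: "(nat \<Rightarrow> nat) \<Rightarrow> nat \<Rightarrow> nat \<Rightarrow> nat" where
  "nq Z n q = card {i\<in>{1..n}. Z i = q}"

definition Btil :: "nat \<Rightarrow> (nat \<Rightarrow> nat \<Rightarrow> real) \<Rightarrow> (nat \<Rightarrow> nat set) \<Rightarrow> (nat \<Rightarrow> nat) \<Rightarrow> nat
    \<Rightarrow> nat \<Rightarrow> nat \<Rightarrow> real" where
  "Btil K iota eff Z n f f' = (1 / (2::real) ^ (2 * (K - 1))) *
     (\<Sum>q\<in>{1..2^K}. gfac iota eff f q * gfac iota eff f' q / real (nq Z n q))"

definition Bsub :: "nat \<Rightarrow> (nat \<Rightarrow> nat \<Rightarrow> real) \<Rightarrow> (nat \<Rightarrow> nat set) \<Rightarrow> (nat \<Rightarrow> nat) \<Rightarrow> nat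
    \<Rightarrow> nat set \<Rightarrow> nat set \<Rightarrow> real mat" where
  "Bsub K iota eff Z n I J = mat (card I) (card J)
     (\<lambda>(i,j). Btil K iota eff Z n (sorted_list_of_set I ! i) (sorted_list_of_set J ! j))"

definition Fbar :: "(nat \<Rightarrow> nat set) \<Rightarrow> nat \<Rightarrow> nat set" where
  "Fbar Fh h = (\<Union>l\<in>{1..h}. Fh l)"

definition cvec :: "nat \<Rightarrow> (nat \<Rightarrow> nat \<Rightarrow> real) \<Rightarrow> (nat \<Rightarrow> nat set) \<Rightarrow> (nat \<Rightarrow> nat) \<Rightarrow> nat
    \<Rightarrow> (nat \<Rightarrow> nat set) \<Rightarrow> nat \<Rightarrow> nat \<Rightarrow> real vec" where
  "cvec K iota eff Z n Fh q h =
     (if h \<le> 1 then bsub iota eff q (Fh 1)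
      else bsub iota eff q (Fh h) -
        Bsub K iota eff Z n (Fh h) (Fbar Fh (h - 1)) *\<^sub>v
          (minv (Bsub K iota eff Z n (Fbar Fh (h - 1)) (Fbar Fh (h - 1)))
             *\<^sub>v bsub iota eff q (Fbar Fh (h - 1))))"

definition xbar :: "(nat \<Rightarrow> nat) \<Rightarrow> nat \<Rightarrow> nat \<Rightarrow> (nat \<Rightarrow> real vec) \<Rightarrow> nat \<Rightarrow> real vec" where
  "xbar Z n L x q = vec L (\<lambda>l. (\<Sum>i\<in>{i\<in>{1..n}. Z i = q}. x i $ l) / real (nq Z n q))"

definition xmean :: "nat \<Rightarrow> nat \<Rightarrow> (nat \<Rightarrow> real vec) \<Rightarrow> real vec" where
  "xmean n L x = vec L (\<lambda>l. (\<Sum>i\<in>{1..n}. x i $ l) / real n)"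

definition Sxx :: "nat \<Rightarrow> nat \<Rightarrow> (nat \<Rightarrow> real vec) \<Rightarrow> real mat" where
  "Sxx n L x = mat L L (\<lambda>(a,b).
     (\<Sum>i\<in>{1..n}. (x i $ a - xmean n L x $ a) * (x i $ b - xmean n L x $ b)) / (real n - 1))"

definition tau_f :: "nat \<Rightarrow> (nat \<Rightarrow> nat \<Rightarrow> real) \<Rightarrow> (nat \<Rightarrow> nat set) \<Rightarrow> (nat \<Rightarrow> nat) \<Rightarrow> nat
    \<Rightarrow> nat \<Rightarrow> (nat \<Rightarrow> real vec) \<Rightarrow> nat \<Rightarrow> real vec" where
  "tau_f K iota eff Z n L x f = vec L (\<lambda>l. (1 / (2::real) ^ (K - 1)) *
     (\<Sum>q\<in>{1..2^K}. gfac iota eff f q * xbar Z n L x q $ l))"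

definition tau_sub :: "nat \<Rightarrow> (nat \<Rightarrow> nat \<Rightarrow> real) \<Rightarrow> (nat \<Rightarrow> nat set) \<Rightarrow> (nat \<Rightarrow> nat) \<Rightarrow> nat
    \<Rightarrow> nat \<Rightarrow> (nat \<Rightarrow> real vec) \<Rightarrow> nat set \<Rightarrow> real vec" where
  "tau_sub K iota eff Z n L x I = vec (card I * L)
     (\<lambda>j. tau_f K iota eff Z n L x (sorted_list_of_set I ! (j div L)) $ (j mod L))"

definition theta :: "nat \<Rightarrow> (nat \<Rightarrow> nat \<Rightarrow> real) \<Rightarrow> (nat \<Rightarrow> nat set) \<Rightarrow> (nat \<Rightarrow> nat) \<Rightarrow> nat
    \<Rightarrow> nat \<Rightarrow> (nat \<Rightarrow> real vec) \<Rightarrow> (nat \<Rightarrow> nat set) \<Rightarrow> nat \<Rightarrow> real vec" where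
  "theta K iota eff Z n L x Fh h = vec (card (Fh h) * L) (\<lambda>j. (1 / (2::real) ^ (K - 1)) *
     (\<Sum>q\<in>{1..2^K}. kron_vec (cvec K iota eff Z n Fh q h) (xbar Z n L x q) $ j))"

definition Wxx :: "nat \<Rightarrow> (nat \<Rightarrow> nat \<Rightarrow> real) \<Rightarrow> (nat \<Rightarrow> nat set) \<Rightarrow> (nat \<Rightarrow> nat) \<Rightarrow> nat
    \<Rightarrow> nat \<Rightarrow> (nat \<Rightarrow> real vec) \<Rightarrow> (nat \<Rightarrow> nat set) \<Rightarrow> nat \<Rightarrow> real mat" where
  "Wxx K iota eff Z n L x Fh h = mat (card (Fh h) * L) (card (Fh h) * L)
     (\<lambda>ij. (1 / (2::real) ^ (2 * (K - 1))) *
       (\<Sum>q\<in>{1..2^K}. kron_mat (outer (cvec K iota eff Z n Fh q h)) (Sxx n L x) $$ ij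
                      / real (nq Z n q)))"

definition Mh :: "nat \<Rightarrow> (nat \<Rightarrow> nat \<Rightarrow> real) \<Rightarrow> (nat \<Rightarrow> nat set) \<Rightarrow> (nat \<Rightarrow> nat) \<Rightarrow> nat
    \<Rightarrow> nat \<Rightarrow> (nat \<Rightarrow> real vec) \<Rightarrow> (nat \<Rightarrow> nat set) \<Rightarrow> nat \<Rightarrow> real" where
  "Mh K iota eff Z n L x Fh h =
     theta K iota eff Z n L x Fh h \<bullet>
       (minv (Wxx K iota eff Z n L x Fh h) *\<^sub>v theta K iota eff Z n L x Fh h)"

end

theory Submission imports Defs begin

lemma sum_PiE_signs:
  fixes I A B :: "nat set"
  assumes fin: "finite I" and AI: "A \<subseteq> I" and BI: "B \<subseteq> I"
  shows "(\<Sum>\<sigma>\<in>PiE I (\<lambda>_. {-1,1::real}). (\<Prod>k\<in>A. \<sigma> k) * (\<Prod>k\<in>B. \<sigma> k))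
         = (if A = B then 2 ^ card I else 0)"
proof -
  have eqA: "(\<Prod>k\<in>C. \<sigma> k) = (\<Prod>k\<in>I. if k \<in> C then \<sigma> k else 1)" if "C \<subseteq> I" for C and \<sigma> :: "nat \<Rightarrow> real"
    using that fin by (simp add: prod.If_cases Int_absorb1 Int_absorb2)
  have "(\<Sum>\<sigma>\<in>PiE I (\<lambda>_. {-1,1::real}). (\<Prod>k\<in>A. \<sigma> k) * (\<Prod>k\<in>B. \<sigma> k))
      = (\<Sum>\<sigma>\<in>PiE I (\<lambda>_. {-1,1::real}). \<Prod>k\<in>I. (if k \<in> A then \<sigma> k else 1) * (if k \<in> B then \<sigma> k else 1))"
    by (simp add: eqA[OF AI] eqA[OF BI] prod.distrib)
  also have "\<dots> = (\<Prod>k\<in>I. \<Sum>s\<in>{-1,1::real}. (if k \<in> A then s else 1) * (if k \<in> B then s else 1))"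
    by (rule prod_sum_PiE[symmetric]) (use fin in auto)
  also have "\<dots> = (\<Prod>k\<in>I. if (k \<in> A) = (k \<in> B) then 2 else 0)"
    by (rule prod.cong) auto
  also have "\<dots> = (if A = B then 2 ^ card I else 0)"
  proof (cases "A = B")
    case True then show ?thesis by simp
  next
    case False
    then obtain k where "k \<in> I" "(k \<in> A) \<noteq> (k \<in> B)" using AI BI by blast
    then show ?thesis using False fin by (auto intro!: prod_zero)
  qed
  finally show ?thesis .
qed

lemma orth:
  fixes K :: nat and iota :: "nat \<Rightarrow> nat \<Rightarrow> real" and eff :: "nat \<Rightarrow> nat set"
  assumes iota: "bij_betw (\<lambda>q. restrict (iota q) {1..K}) {1..2^K} ({1..K} \<rightarrow>\<^sub>E {-1, 1})"
    and eff: "bij_betw eff {1..2^K - 1} {A. A \<subseteq> {1..K} \<and> A \<noteq> {}}"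
    and f: "f \<in> {1..2^K - 1}" and f': "f' \<in> {1..2^K - 1}"
  shows "(\<Sum>q\<in>{1..2^K}. gfac iota eff f q * gfac iota eff f' q) = (if f = f' then 2 ^ K else 0)"
proof -
  have sA: "eff f \<subseteq> {1..K}" "eff f' \<subseteq> {1..K}"
    using f f' bij_betw_apply[OF eff] by blast+
  define \<Phi> where "\<Phi> \<sigma> = (\<Prod>k\<in>eff f. \<sigma> k) * (\<Prod>k\<in>eff f'. (\<sigma> :: nat \<Rightarrow> real) k)" for \<sigma>
  have "gfac iota eff f q * gfac iota eff f' q = \<Phi> (restrict (iota q) {1..K})" for q
    unfolding gfac_def \<Phi>_def using sA by (intro arg_cong2[where f="(*)"] prod.cong) auto
  then have "(\<Sum>q\<in>{1..2^K}. gfac iota eff f q * gfac iota eff f' q) = (\<Sum>q\<in>{1..2^K}. \<Phi> (restrict (iota q) {1..K}))"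
    by simp
  also have "\<dots> = (\<Sum>\<sigma>\<in>{1..K} \<rightarrow>\<^sub>E {-1, 1}. \<Phi> \<sigma>)"
    by (rule sum.reindex_bij_betw[OF iota])
  also have "\<dots> = (if eff f = eff f' then 2 ^ card {1..K} else 0)"
    unfolding \<Phi>_def by (rule sum_PiE_signs) (use sA in auto)
  also have "(eff f = eff f') = (f = f')"
    using bij_betw_imp_inj_on[OF eff] f f' by (auto dest: inj_onD)
  finally show ?thesis by simp
qed

lemma orth_w:
  fixes K :: nat and iota :: "nat \<Rightarrow> nat \<Rightarrow> real" and eff :: "nat \<Rightarrow> nat set"
  assumes iota: "bij_betw (\<lambda>q. restrict (iota q) {1..K}) {1..2^K} ({1..K} \<rightarrow>\<^sub>E {-1, 1})"
    and eff: "bij_betw eff {1..2^K - 1} {A. A \<subseteq> {1..K} \<and> A \<noteq> {}}"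
    and f: "f \<in> {1..2^K - 1}" and f': "f' \<in> {1..2^K - 1}"
    and K: "K \<ge> 1"
    and balanced: "\<forall>q\<in>{1..2^K}. real (nq Z n q) = real n / 2^K"
  shows "1 / (2::real) ^ (2 * (K - 1)) * (\<Sum>q\<in>{1..2^K}. gfac iota eff f q * gfac iota eff f' q * C / real (nq Z n q))
     = (if f = f' then 4 / real n * C else 0)"
proof -
  have "(\<Sum>q\<in>{1..2^K}. gfac iota eff f q * gfac iota eff f' q * C / real (nq Z n q))
      = (\<Sum>q\<in>{1..2^K}. gfac iota eff f q * gfac iota eff f' q) * (C * 2^K / real n)"
    unfolding sum_distrib_right
  proof (rule sum.cong[OF refl])
    fix q :: nat assume "q \<in> {1..2^K}"
    then have "real (nq Z n q) = real n / 2^K" using balanced by blast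
    then show "gfac iota eff f q * gfac iota eff f' q * C / real (nq Z n q) = gfac iota eff f q * gfac iota eff f' q * (C * 2 ^ K / real n)"
      by simp
  qed
  also have "\<dots> = (if f = f' then 2^K * (C * 2^K / real n) else 0)"
    using orth[OF iota eff f f'] by simp
  finally have e: "(\<Sum>q\<in>{1..2^K}. gfac iota eff f q * gfac iota eff f' q * C / real (nq Z n q)) = \<dots>" .
  have p: "(2::real) ^ K * 2 ^ K = 4 * 2 ^ (2 * (K - 1))"
  proof -
    have "2 * K = 2 * (K - 1) + 2" using K by simp
    then have "(2::real) ^ (2 * K) = 2 ^ (2 * (K - 1)) * 2^2" by (simp only: power_add)
    then show ?thesis by (simp add: power_add[symmetric] mult_2)
  qed
  have "1 / (2::real) ^ (2 * (K - 1)) * (2^K * (C * 2^K / real n)) = (2^K * 2^K) * C / (real n * 2 ^ (2 * (K - 1)))"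
    by (simp add: ac_simps)
  also have "\<dots> = 4 / real n * C" unfolding p by simp
  finally show ?thesis unfolding e by (simp add: ac_simps)
qed


lemma minv_eq:
  assumes A: "A \<in> carrier_mat n n" and X: "X \<in> carrier_mat n n"
    and AX: "A * X = 1\<^sub>m n" and XA: "X * A = 1\<^sub>m n"
  shows "minv A = X"
proof -
  have dr: "dim_row A = n" using A by simp
  have "\<exists>B. B \<in> carrier_mat (dim_row A) (dim_row A) \<and> A * B = 1\<^sub>m (dim_row A) \<and> B * A = 1\<^sub>m (dim_row A)"
    using X AX XA dr by blast
  then have B: "minv A \<in> carrier_mat n n" "A * minv A = 1\<^sub>m n" "minv A * A = 1\<^sub>m n"
    unfolding minv_def dr by (metis (mono_tags, lifting) someI_ex)+
  have "minv A = minv A * 1\<^sub>m n" using B(1) by simp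
  also have "\<dots> = minv A * (A * X)" by (simp add: AX)
  also have "\<dots> = (minv A * A) * X" by (rule assoc_mult_mat[symmetric]) (use B A X in auto)
  also have "\<dots> = X" using B X by simp
  finally show ?thesis .
qed

lemma sum_blocks: "(\<Sum>k\<in>{0..<m*L}. F k) = (\<Sum>a<m. \<Sum>b<L. F (a*L+b::nat))"
proof -
  have "(\<Sum>k\<in>{0..<m*L}. F k) = (\<Sum>a<m. sum F {a*L..<a*L+L})"
    by (simp add: atLeast0LessThan sum.nat_group)
  also have "\<dots> = (\<Sum>a<m. \<Sum>b<L. F (a*L+b))"
  proof (rule sum.cong[OF refl])
    fix a
    have "sum F {0+a*L..<L+a*L} = (\<Sum>b\<in>{0..<L}. F (b + a*L))" by (rule sum.shift_bounds_nat_ivl)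
    then show "sum F {a*L..<a*L+L} = (\<Sum>b<L. F (a*L+b))" by (simp add: atLeast0LessThan add.commute)
  qed
  finally show ?thesis .
qed

definition blk :: "nat \<Rightarrow> nat \<Rightarrow> real mat \<Rightarrow> real mat" where
  "blk m L T = mat (m*L) (m*L) (\<lambda>(i,j). if i div L = j div L then T $$ (i mod L, j mod L) else 0)"

lemma blk_carrier: "blk m L T \<in> carrier_mat (m*L) (m*L)" by (simp add: blk_def)

lemma blk_mult:
  assumes T: "T \<in> carrier_mat L L" and U: "U \<in> carrier_mat L L"
  shows "blk m L T * blk m L U = blk m L (T * U)"
proof (rule eq_matI)
  fix i j assume "i < dim_row (blk m L (T * U))" "j < dim_col (blk m L (T * U))"
  then have i: "i < m*L" and j: "j < m*L" by (auto simp: blk_def)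
  then have L: "L > 0" by (cases L) auto
  have idm: "i div L < m" using i by (simp add: less_mult_imp_div_less)
  have im: "i mod L < L" "j mod L < L" using L by auto
  have "(blk m L T * blk m L U) $$ (i,j) = (\<Sum>k\<in>{0..<m*L}. blk m L T $$ (i,k) * blk m L U $$ (k,j))"
    using i j by (simp add: blk_def scalar_prod_def)
  also have "\<dots> = (\<Sum>a<m. \<Sum>b<L. blk m L T $$ (i,a*L+b) * blk m L U $$ (a*L+b,j))"
    by (rule sum_blocks)
  also have "\<dots> = (\<Sum>a<m. \<Sum>b<L. if a = i div L then (if i div L = j div L then T $$ (i mod L, b) * U $$ (b, j mod L) else 0) else 0)"
  proof (intro sum.cong refl)
    fix a b assume a: "a \<in> {..<m}" and b: "b \<in> {..<L}"
    have "a*L+b < (a+1)*L" using b by simp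
    also have "(a+1)*L \<le> m*L" using a by (intro mult_right_mono) auto
    finally have ab: "a*L+b < m*L" .
    have dv: "(a*L+b) div L = a" "(a*L+b) mod L = b" using b L by auto
    show "blk m L T $$ (i,a*L+b) * blk m L U $$ (a*L+b,j) = (if a = i div L then (if i div L = j div L then T $$ (i mod L, b) * U $$ (b, j mod L) else 0) else 0)"
      using i j ab dv by (auto simp: blk_def)
  qed
  also have "\<dots> = (\<Sum>a<m. if a = i div L then (if i div L = j div L then (\<Sum>b<L. T $$ (i mod L, b) * U $$ (b, j mod L)) else 0) else 0)"
    by (intro sum.cong refl) auto
  also have "\<dots> = (if i div L = j div L then (\<Sum>b<L. T $$ (i mod L, b) * U $$ (b, j mod L)) else 0)"
    using idm by (subst sum.delta) auto
  also have "\<dots> = blk m L (T * U) $$ (i,j)"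
    using i j T U im by (simp add: blk_def scalar_prod_def atLeast0LessThan)
  finally show "(blk m L T * blk m L U) $$ (i,j) = blk m L (T * U) $$ (i,j)" .
qed (auto simp: blk_def)

lemma blk_one: "blk m L (1\<^sub>m L) = 1\<^sub>m (m*L)"
proof (rule eq_matI)
  fix i j assume "i < dim_row (1\<^sub>m (m*L))" "j < dim_col (1\<^sub>m (m*L)::real mat)"
  then have i: "i < m*L" and j: "j < m*L" by auto
  then have L: "L > 0" by (cases L) auto
  have "(i = j) = (i div L = j div L \<and> i mod L = j mod L)"
    by (metis div_mult_mod_eq)
  then show "blk m L (1\<^sub>m L) $$ (i,j) = 1\<^sub>m (m*L) $$ (i,j)"
    using i j L by (auto simp: blk_def)
qed (auto simp: blk_def)


lemma sl_mem: "finite I \<Longrightarrow> i < card I \<Longrightarrow> sorted_list_of_set I ! i \<in> I"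
  by (metis length_sorted_list_of_set nth_mem set_sorted_list_of_set)

lemma sl_inj: "finite I \<Longrightarrow> i < card I \<Longrightarrow> j < card I \<Longrightarrow>
   (sorted_list_of_set I ! i = sorted_list_of_set I ! j) = (i = j)"
  by (simp add: nth_eq_iff_index_eq)

lemma sl_sum: "finite I \<Longrightarrow> (\<Sum>a<card I. g (sorted_list_of_set I ! a)) = (\<Sum>f\<in>I. g f)"
proof -
  assume I: "finite I"
  have "(\<Sum>f\<in>I. g f) = (\<Sum>f\<in>set (sorted_list_of_set I). g f)" using I by simp
  also have "\<dots> = sum_list (map g (sorted_list_of_set I))"
    by (rule sum.distinct_set_conv_list) simp
  also have "\<dots> = (\<Sum>a<card I. g (sorted_list_of_set I ! a))"
    by (simp add: sum_list_sum_nth atLeast0LessThan)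
  finally show ?thesis by simp
qed

lemma smult_one_mult: "(a \<cdot>\<^sub>m 1\<^sub>m k) * (b \<cdot>\<^sub>m (1\<^sub>m k :: real mat)) = (a*b) \<cdot>\<^sub>m 1\<^sub>m k"
proof -
  have "(a \<cdot>\<^sub>m 1\<^sub>m k) * (b \<cdot>\<^sub>m (1\<^sub>m k :: real mat)) = a \<cdot>\<^sub>m (1\<^sub>m k * (b \<cdot>\<^sub>m (1\<^sub>m k :: real mat)))"
    by (rule mult_smult_assoc_mat) auto
  also have "\<dots> = a \<cdot>\<^sub>m (b \<cdot>\<^sub>m (1\<^sub>m k * 1\<^sub>m k))"
    by (subst mult_smult_distrib) auto
  also have "\<dots> = (a*b) \<cdot>\<^sub>m 1\<^sub>m k" by (rule eq_matI) auto
  finally show ?thesis .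
qed

lemma one_smult_mat_real[simp]: "(1::real) \<cdot>\<^sub>m A = A" by (rule eq_matI) auto
theorem proposition7:
  fixes K n L H :: nat
    and iota :: "nat \<Rightarrow> nat \<Rightarrow> real"
    and eff :: "nat \<Rightarrow> nat set"
    and Z :: "nat \<Rightarrow> nat"
    and x :: "nat \<Rightarrow> real vec"
    and Fh :: "nat \<Rightarrow> nat set"
  assumes K: "K \<ge> 1"
    and iota: "bij_betw (\<lambda>q. restrict (iota q) {1..K}) {1..2^K} ({1..K} \<rightarrow>\<^sub>E {-1, 1})"
    and eff: "bij_betw eff {1..2^K - 1} {A. A \<subseteq> {1..K} \<and> A \<noteq> {}}"
    and xdim: "\<forall>i\<in>{1..n}. dim_vec (x i) = L"
    and Z: "\<forall>i\<in>{1..n}. Z i \<in> {1..2^K}"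
    and nq_pos: "\<forall>q\<in>{1..2^K}. nq Z n q \<ge> 1"
    and S_nonsing: "invertible_mat (Sxx n L x)"
    and H: "H \<ge> 1"
    and tiers_ne: "\<forall>h\<in>{1..H}. Fh h \<noteq> {}"
    and tiers_disj: "\<forall>h\<in>{1..H}. \<forall>h'\<in>{1..H}. h \<noteq> h' \<longrightarrow> Fh h \<inter> Fh h' = {}"
    and tiers_cover: "(\<Union>h\<in>{1..H}. Fh h) = {1..2^K - 1}"
    and balanced: "\<forall>q\<in>{1..2^K}. real (nq Z n q) = real n / 2^K"
  shows "(\<forall>q\<in>{1..2^K}. \<forall>h\<in>{1..H}. cvec K iota eff Z n Fh q h = bsub iota eff q (Fh h))
       \<and> (\<forall>h\<in>{1..H}. theta K iota eff Z n L x Fh h = tau_sub K iota eff Z n L x (Fh h))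
       \<and> (\<forall>h\<in>{1..H}. Mh K iota eff Z n L x Fh h =
            real n / 4 * (\<Sum>f\<in>Fh h. tau_f K iota eff Z n L x f \<bullet>
                              (minv (Sxx n L x) *\<^sub>v tau_f K iota eff Z n L x f)))"
proof -
  let ?sl = "sorted_list_of_set :: nat set \<Rightarrow> nat list"
  let ?U = "{1..2^K - 1 :: nat}"
  have npos: "real n > 0"
  proof -
    have "(1::nat) \<in> {1..2^K}" by simp
    then have "real (nq Z n 1) = real n / 2^K" "nq Z n 1 \<ge> 1" using balanced nq_pos by blast+
    then have "real n / 2^K \<ge> 1" by linarith
    then show ?thesis by (smt (verit) divide_nonpos_pos zero_less_power)
  qed
  have Fsub: "Fh h \<subseteq> ?U" if "h \<in> {1..H}" for h using tiers_cover that by blast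
  have Bt: "Btil K iota eff Z n f f' = (if f = f' then 4 / real n else 0)" if "f \<in> ?U" "f' \<in> ?U" for f f'
    using orth_w[OF iota eff that K balanced, of 1] unfolding Btil_def by simp
  have Bs: "Bsub K iota eff Z n I J = mat (card I) (card J) (\<lambda>(i,j). if ?sl I ! i = ?sl J ! j then 4 / real n else 0)"
    if "I \<subseteq> ?U" "J \<subseteq> ?U" for I J
  proof (rule eq_matI)
    fix i j assume "i < dim_row (mat (card I) (card J) (\<lambda>(i,j). if ?sl I ! i = ?sl J ! j then 4 / real n else (0::real)))"
      "j < dim_col (mat (card I) (card J) (\<lambda>(i,j). if ?sl I ! i = ?sl J ! j then 4 / real n else (0::real)))"
    then have ij: "i < card I" "j < card J" by auto
    have fin: "finite I" "finite J" using that finite_subset by blast+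
    have "?sl I ! i \<in> ?U" "?sl J ! j \<in> ?U" using sl_mem[OF fin(1) ij(1)] sl_mem[OF fin(2) ij(2)] that by blast+
    then show "Bsub K iota eff Z n I J $$ (i, j) = mat (card I) (card J) (\<lambda>(i,j). if ?sl I ! i = ?sl J ! j then 4 / real n else 0) $$ (i, j)"
      using ij Bt unfolding Bsub_def by simp
  qed (auto simp: Bsub_def)
  have P1: "cvec K iota eff Z n Fh q h = bsub iota eff q (Fh h)" if q: "q\<in>{1..2^K}" and h: "h\<in>{1..H}" for q h
  proof (cases "h \<le> 1")
    case True then show ?thesis using h by (simp add: cvec_def)
  next
    case False
    let ?I = "Fh h" and ?J = "Fbar Fh (h - 1)"
    have IU: "?I \<subseteq> ?U" using Fsub h by blast
    have JU: "?J \<subseteq> ?U" unfolding Fbar_def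
    proof (rule UN_least)
      fix l assume "l \<in> {1..h-1}"
      then have "l \<in> {1..H}" using h by auto
      then show "Fh l \<subseteq> ?U" by (rule Fsub)
    qed
    have disj: "?I \<inter> ?J = {}" unfolding Fbar_def
    proof -
      have "Fh h \<inter> Fh l = {}" if l: "l \<in> {1..h-1}" for l
      proof -
        have "l \<in> {1..H}" "l \<noteq> h" using h l by auto
        then show ?thesis using tiers_disj h by blast
      qed
      then show "Fh h \<inter> (\<Union>l\<in>{1..h - 1}. Fh l) = {}" by blast
    qed
    have finI: "finite ?I" and finJ: "finite ?J" using IU JU finite_subset by blast+
    have BJJ: "Bsub K iota eff Z n ?J ?J = (4 / real n) \<cdot>\<^sub>m 1\<^sub>m (card ?J)"
      unfolding Bs[OF JU JU]
    proof (rule eq_matI)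
      fix i j assume "i < dim_row ((4 / real n) \<cdot>\<^sub>m (1\<^sub>m (card ?J) :: real mat))"
        "j < dim_col ((4 / real n) \<cdot>\<^sub>m (1\<^sub>m (card ?J) :: real mat))"
      then have ij: "i < card ?J" "j < card ?J" by auto
      show "mat (card ?J) (card ?J) (\<lambda>(i, j). if ?sl ?J ! i = ?sl ?J ! j then 4 / real n else 0) $$ (i, j) =
         ((4 / real n) \<cdot>\<^sub>m (1\<^sub>m (card ?J) :: real mat)) $$ (i, j)"
        using ij sl_inj[OF finJ ij] by simp
    qed auto
    have mJ: "minv (Bsub K iota eff Z n ?J ?J) = (real n / 4) \<cdot>\<^sub>m 1\<^sub>m (card ?J)"
      unfolding BJJ using npos
      by (intro minv_eq[where n="card ?J"]) (simp_all add: smult_one_mult)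
    define w where "w = minv (Bsub K iota eff Z n ?J ?J) *\<^sub>v bsub iota eff q ?J"
    have dw: "dim_vec w = card ?J" unfolding w_def mJ by simp
    have z: "Bsub K iota eff Z n ?I ?J *\<^sub>v w = 0\<^sub>v (card ?I)"
    proof (rule eq_vecI)
      fix i assume "i < dim_vec (0\<^sub>v (card ?I) :: real vec)"
      then have i: "i < card ?I" by simp
      have "row (Bsub K iota eff Z n ?I ?J) i \<bullet> w = 0"
        unfolding scalar_prod_def dw
      proof (rule sum.neutral, rule ballI)
        fix k assume "k \<in> {0..<card ?J}"
        then have k: "k < card ?J" by simp
        have "?sl ?I ! i \<noteq> ?sl ?J ! k" using sl_mem[OF finI i] sl_mem[OF finJ k] disj by auto
        then show "row (Bsub K iota eff Z n ?I ?J) i $ k * w $ k = 0"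
          using i k unfolding Bs[OF IU JU] by simp
      qed
      then show "(Bsub K iota eff Z n ?I ?J *\<^sub>v w) $ i = 0\<^sub>v (card ?I) $ i"
        using i by (simp add: Bsub_def)
    qed (simp add: Bsub_def)
    show ?thesis using False unfolding cvec_def w_def[symmetric] z
      by (simp add: bsub_def)
  qed

  have P2: "theta K iota eff Z n L x Fh h = tau_sub K iota eff Z n L x (Fh h)" if h: "h\<in>{1..H}" for h
  proof (rule eq_vecI)
    fix j assume "j < dim_vec (tau_sub K iota eff Z n L x (Fh h))"
    then have j: "j < card (Fh h) * L" by (simp add: tau_sub_def)
    then have L: "L > 0" by (cases L) auto
    have jd: "j div L < card (Fh h)" using j by (simp add: less_mult_imp_div_less)
    have jm: "j mod L < L" using L by simp
    have dx: "dim_vec (xbar Z n L x q) = L" for q by (simp add: xbar_def)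
    have kq: "kron_vec (cvec K iota eff Z n Fh q h) (xbar Z n L x q) $ j
        = gfac iota eff (?sl (Fh h) ! (j div L)) q * xbar Z n L x q $ (j mod L)" if q: "q \<in> {1..2^K}" for q
      unfolding P1[OF q h] kron_vec_def dx using j jd by (simp add: bsub_def)
    have "theta K iota eff Z n L x Fh h $ j = 1 / 2 ^ (K - 1) *
        (\<Sum>q\<in>{1..2^K}. gfac iota eff (?sl (Fh h) ! (j div L)) q * xbar Z n L x q $ (j mod L))"
      unfolding theta_def using j kq by simp
    also have "\<dots> = tau_sub K iota eff Z n L x (Fh h) $ j"
      unfolding tau_sub_def tau_f_def using j jm by simp
    finally show "theta K iota eff Z n L x Fh h $ j = tau_sub K iota eff Z n L x (Fh h) $ j" .
  qed (simp add: theta_def tau_sub_def)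

  have P3: "Mh K iota eff Z n L x Fh h =
            real n / 4 * (\<Sum>f\<in>Fh h. tau_f K iota eff Z n L x f \<bullet>
                              (minv (Sxx n L x) *\<^sub>v tau_f K iota eff Z n L x f))" if h: "h\<in>{1..H}" for h
  proof -
    let ?S = "Sxx n L x" and ?I = "Fh h"
    let ?m = "card ?I"
    let ?W = "Wxx K iota eff Z n L x Fh h"
    let ?\<theta> = "theta K iota eff Z n L x Fh h"
    let ?\<tau> = "\<lambda>a. tau_f K iota eff Z n L x (?sl ?I ! a)"
    have IU: "?I \<subseteq> ?U" using Fsub h by blast
    have finI: "finite ?I" using IU finite_subset by blast
    have SC: "?S \<in> carrier_mat L L" by (simp add: Sxx_def)
    obtain B where B: "inverts_mat ?S B" "inverts_mat B ?S" using S_nonsing unfolding invertible_mat_def by blast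
    have SB: "?S * B = 1\<^sub>m L" and BS: "B * ?S = 1\<^sub>m (dim_row B)"
      using B SC unfolding inverts_mat_def by auto
    have "dim_col (B * ?S) = L" using SC by simp
    then have dBr: "dim_row B = L" unfolding BS by simp
    have "dim_col (?S * B) = L" unfolding SB by simp
    then have BC: "B \<in> carrier_mat L L" using dBr by auto
    have mS: "minv ?S = B" by (rule minv_eq[OF SC BC SB]) (use BS dBr in simp)
    have mSC: "minv ?S \<in> carrier_mat L L" and SmS: "?S * minv ?S = 1\<^sub>m L" and mSS: "minv ?S * ?S = 1\<^sub>m L"
      using mS BC SB BS dBr by auto
    have W: "?W = blk ?m L ((4 / real n) \<cdot>\<^sub>m ?S)"
    proof (rule eq_matI)
      fix i j assume "i < dim_row (blk ?m L ((4 / real n) \<cdot>\<^sub>m ?S))" "j < dim_col (blk ?m L ((4 / real n) \<cdot>\<^sub>m ?S))"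
      then have i: "i < ?m * L" and j: "j < ?m * L" by (auto simp: blk_def)
      then have L: "L > 0" by (cases L) auto
      have id: "i div L < ?m" "j div L < ?m" using i j by (simp_all add: less_mult_imp_div_less)
      have im: "i mod L < L" "j mod L < L" using L by auto
      let ?fa = "?sl ?I ! (i div L)" and ?fb = "?sl ?I ! (j div L)"
      have fU: "?fa \<in> ?U" "?fb \<in> ?U" using sl_mem[OF finI id(1)] sl_mem[OF finI id(2)] IU by blast+
      have kq: "kron_mat (outer (cvec K iota eff Z n Fh q h)) ?S $$ (i, j)
          = gfac iota eff ?fa q * gfac iota eff ?fb q * ?S $$ (i mod L, j mod L)" if q: "q \<in> {1..2^K}" for q
        unfolding P1[OF q h] kron_mat_def outer_def using i j id SC by (simp add: bsub_def)
      have "?W $$ (i,j) = 1 / (2::real) ^ (2 * (K - 1)) *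
          (\<Sum>q\<in>{1..2^K}. gfac iota eff ?fa q * gfac iota eff ?fb q * ?S $$ (i mod L, j mod L) / real (nq Z n q))"
        unfolding Wxx_def using i j kq by simp
      also have "\<dots> = (if ?fa = ?fb then 4 / real n * ?S $$ (i mod L, j mod L) else 0)"
        by (rule orth_w[OF iota eff fU K balanced])
      also have "\<dots> = blk ?m L ((4 / real n) \<cdot>\<^sub>m ?S) $$ (i,j)"
        using i j im SC sl_inj[OF finI id] by (simp add: blk_def)
      finally show "?W $$ (i,j) = blk ?m L ((4 / real n) \<cdot>\<^sub>m ?S) $$ (i,j)" .
    qed (auto simp: blk_def Wxx_def)
    have prod1: "((4 / real n) \<cdot>\<^sub>m ?S) * ((real n / 4) \<cdot>\<^sub>m minv ?S) = 1\<^sub>m L"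
    proof -
      have "((4 / real n) \<cdot>\<^sub>m ?S) * ((real n / 4) \<cdot>\<^sub>m minv ?S) = (4 / real n) \<cdot>\<^sub>m (?S * ((real n / 4) \<cdot>\<^sub>m minv ?S))"
        by (rule mult_smult_assoc_mat[OF SC]) (use mSC in auto)
      also have "\<dots> = (4 / real n) \<cdot>\<^sub>m ((real n / 4) \<cdot>\<^sub>m (?S * minv ?S))"
        by (subst mult_smult_distrib[OF SC mSC]) rule
      also have "\<dots> = 1\<^sub>m L" unfolding SmS using npos by (intro eq_matI) auto
      finally show ?thesis .
    qed
    have prod2: "((real n / 4) \<cdot>\<^sub>m minv ?S) * ((4 / real n) \<cdot>\<^sub>m ?S) = 1\<^sub>m L"
    proof -
      have "((real n / 4) \<cdot>\<^sub>m minv ?S) * ((4 / real n) \<cdot>\<^sub>m ?S) = (real n / 4) \<cdot>\<^sub>m (minv ?S * ((4 / real n) \<cdot>\<^sub>m ?S))"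
        by (rule mult_smult_assoc_mat[OF mSC]) (use SC in auto)
      also have "\<dots> = (real n / 4) \<cdot>\<^sub>m ((4 / real n) \<cdot>\<^sub>m (minv ?S * ?S))"
        by (subst mult_smult_distrib[OF mSC SC]) rule
      also have "\<dots> = 1\<^sub>m L" unfolding mSS using npos by (intro eq_matI) auto
      finally show ?thesis .
    qed
    define X where "X = blk ?m L ((real n / 4) \<cdot>\<^sub>m minv ?S)"
    have mW: "minv ?W = X" unfolding W X_def
      by (rule minv_eq[OF blk_carrier blk_carrier])
         (simp_all add: blk_mult prod1 prod2 blk_one SC mSC)
    define v where "v = vec (?m * L) (\<lambda>j. real n / 4 * (minv ?S *\<^sub>v ?\<tau> (j div L)) $ (j mod L))"
    have d\<tau>: "dim_vec (?\<tau> a) = L" for a by (simp add: tau_f_def)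
    have d\<theta>: "dim_vec ?\<theta> = ?m * L" by (simp add: theta_def)
    have \<theta>e: "?\<theta> $ (a*L+b) = ?\<tau> a $ b" if "a < ?m" "b < L" for a b
    proof -
      have "a*L+b < (a+1)*L" using that by simp
      also have "(a+1)*L \<le> ?m*L" using that by (intro mult_right_mono) auto
      finally have "a*L+b < ?m*L" .
      then show ?thesis unfolding P2[OF h] tau_sub_def using that by simp
    qed
    have Xv: "X *\<^sub>v ?\<theta> = v"
    proof (rule eq_vecI)
      fix i assume "i < dim_vec v"
      then have i: "i < ?m * L" by (simp add: v_def)
      then have L: "L > 0" by (cases L) auto
      have idm: "i div L < ?m" using i by (simp add: less_mult_imp_div_less)
      have im: "i mod L < L" using L by auto
      have "(X *\<^sub>v ?\<theta>) $ i = (\<Sum>k\<in>{0..<?m*L}. X $$ (i,k) * ?\<theta> $ k)"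
        using i d\<theta> by (simp add: X_def blk_def scalar_prod_def)
      also have "\<dots> = (\<Sum>a<?m. \<Sum>b<L. X $$ (i,a*L+b) * ?\<theta> $ (a*L+b))"
        by (rule sum_blocks)
      also have "\<dots> = (\<Sum>a<?m. if a = i div L then (\<Sum>b<L. real n / 4 * (minv ?S $$ (i mod L, b) * ?\<tau> (i div L) $ b)) else 0)"
      proof (rule sum.cong[OF refl])
        fix a assume a: "a \<in> {..<?m}"
        have "X $$ (i,a*L+b) * ?\<theta> $ (a*L+b) = (if a = i div L then real n / 4 * (minv ?S $$ (i mod L, b) * ?\<tau> (i div L) $ b) else 0)"
          if b: "b < L" for b
        proof -
          have "a*L+b < (a+1)*L" using b by simp
          also have "(a+1)*L \<le> ?m*L" using a by (intro mult_right_mono) auto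
          finally have ab: "a*L+b < ?m*L" .
          have dv: "(a*L+b) div L = a" "(a*L+b) mod L = b" using b L by auto
          show ?thesis using i ab dv \<theta>e[of a b] a b mSC im by (auto simp: X_def blk_def)
        qed
        then show "(\<Sum>b<L. X $$ (i,a*L+b) * ?\<theta> $ (a*L+b)) = (if a = i div L then (\<Sum>b<L. real n / 4 * (minv ?S $$ (i mod L, b) * ?\<tau> (i div L) $ b)) else 0)"
          by simp
      qed
      also have "\<dots> = (\<Sum>b<L. real n / 4 * (minv ?S $$ (i mod L, b) * ?\<tau> (i div L) $ b))"
        using idm by (subst sum.delta) auto
      also have "\<dots> = v $ i"
        using i im mSC d\<tau> by (simp add: v_def scalar_prod_def sum_distrib_left atLeast0LessThan)
      finally show "(X *\<^sub>v ?\<theta>) $ i = v $ i" .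
    qed (simp add: v_def X_def blk_def)
    have "Mh K iota eff Z n L x Fh h = ?\<theta> \<bullet> v" unfolding Mh_def mW Xv ..
    also have "\<dots> = (\<Sum>k\<in>{0..<?m*L}. ?\<theta> $ k * v $ k)" by (simp add: scalar_prod_def v_def)
    also have "\<dots> = (\<Sum>a<?m. \<Sum>b<L. ?\<theta> $ (a*L+b) * v $ (a*L+b))" by (rule sum_blocks)
    also have "\<dots> = (\<Sum>a<?m. real n / 4 * (?\<tau> a \<bullet> (minv ?S *\<^sub>v ?\<tau> a)))"
    proof (rule sum.cong[OF refl])
      fix a assume a: "a \<in> {..<?m}"
      have "?\<theta> $ (a*L+b) * v $ (a*L+b) = real n / 4 * (?\<tau> a $ b * (minv ?S *\<^sub>v ?\<tau> a) $ b)" if b: "b < L" for b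
      proof -
        have "a*L+b < (a+1)*L" using b by simp
        also have "(a+1)*L \<le> ?m*L" using a by (intro mult_right_mono) auto
        finally have ab: "a*L+b < ?m*L" .
        have L: "L > 0" using b by simp
        have dv: "(a*L+b) div L = a" "(a*L+b) mod L = b" using b L by auto
        show ?thesis using ab dv \<theta>e[of a b] a b by (simp add: v_def)
      qed
      then show "(\<Sum>b<L. ?\<theta> $ (a*L+b) * v $ (a*L+b)) = real n / 4 * (?\<tau> a \<bullet> (minv ?S *\<^sub>v ?\<tau> a))"
        using mSC by (simp add: scalar_prod_def sum_distrib_left atLeast0LessThan)
    qed
    also have "\<dots> = real n / 4 * (\<Sum>a<?m. ?\<tau> a \<bullet> (minv ?S *\<^sub>v ?\<tau> a))"
      by (simp add: sum_distrib_left)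
    also have "(\<Sum>a<?m. ?\<tau> a \<bullet> (minv ?S *\<^sub>v ?\<tau> a)) = (\<Sum>f\<in>?I. tau_f K iota eff Z n L x f \<bullet> (minv ?S *\<^sub>v tau_f K iota eff Z n L x f))"
      by (rule sl_sum[OF finI])
    finally show ?thesis .
  qed

  show ?thesis using P1 P2 P3 by blast
qed

end
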